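(* Let $X$ be a non-empty set and $A$ a non-empty subset of $X$. Then $$|\operatorname{Reg}(\mathcal T_X(A))|=\sum_{\mu=1}^{|A|}\mu!\,\mu^{|X\setminus A|}\,S(|A|,\mu)\binom{|A|}{\mu},$$ where the sum ranges over cardinals $\mu$ with $1\le\mu\le|A|$ (cardinal arithmetic).
   Context: $\mathcal T_X(A)=\{f:X\to X \mid \operatorname{im}(f)\subseteq A\}$ under composition; $\operatorname{Reg}(T)$ is the set of regular elements of $T$. For cardinals $\nu\le\mu$: $\mu!$ is the number of permutations of a set of size $\mu$; $\binom{\mu}{\nu}$ is the number of subsets of size $\nu$ of a set of size $\mu$; $S(\mu,\nu)$ is the number of equivalence relations with exactly $\nu$ classes on a set of size $\mu$. *)

theory Defs
  imports Main "HOL-Library.Equipollence" "HOL-Library.FuncSet" "HOL-Combinatorics.Permutations"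
begin

text \<open>The semigroup T_X(A): maps X -> X with image in A, represented as extensional
  functions on X (undefined outside X), under composition restricted to X.\<close>
definition TXA :: "'a set \<Rightarrow> 'a set \<Rightarrow> ('a \<Rightarrow> 'a) set" where
  "TXA X A = (X \<rightarrow>\<^sub>E A)"

definition Tcomp :: "'a set \<Rightarrow> ('a \<Rightarrow> 'a) \<Rightarrow> ('a \<Rightarrow> 'a) \<Rightarrow> ('a \<Rightarrow> 'a)" where
  "Tcomp X f g = compose X f g"

definition Reg :: "'s set \<Rightarrow> ('s \<Rightarrow> 's \<Rightarrow> 's) \<Rightarrow> 's set" where
  "Reg S mul = {a \<in> S. \<exists>x \<in> S. mul (mul a x) a = a}"

text \<open>Cardinals mu with 1 <= mu <= |A|, represented as equipollence classes of
  non-empty subsets of A.\<close>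
definition cards_upto :: "'a set \<Rightarrow> 'a set set set" where
  "cards_upto A = {B. B \<subseteq> A \<and> B \<noteq> {}} // {(B, C). B \<approx> C}"

text \<open>Sets witnessing the cardinals mu!, mu^|X-A|, S(|A|,mu), binom(|A|,mu),
  where mu = |B|.\<close>
definition perms_of :: "'a set \<Rightarrow> ('a \<Rightarrow> 'a) set" where
  "perms_of B = {f. f permutes B}"

definition eqrels_with_classes :: "'a set \<Rightarrow> 'a set \<Rightarrow> ('a \<times> 'a) set set" where
  "eqrels_with_classes A B = {r. equiv A r \<and> A // r \<approx> B}"

definition subsets_of_size :: "'a set \<Rightarrow> 'a set \<Rightarrow> 'a set set" where
  "subsets_of_size A B = {C. C \<subseteq> A \<and> C \<approx> B}"

definition summand :: "'a set \<Rightarrow> 'a set \<Rightarrow> 'a set \<Rightarrow>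
    (('a \<Rightarrow> 'a) \<times> ('a \<Rightarrow> 'a) \<times> ('a \<times> 'a) set \<times> 'a set) set" where
  "summand X A B = perms_of B \<times> ((X - A) \<rightarrow>\<^sub>E B) \<times> eqrels_with_classes A B \<times> subsets_of_size A B"

text \<open>The cardinal sum over all cardinals 1 <= mu <= |A| (disjoint union), choosing a
  representative subset B of A for each cardinal.\<close>
definition reg_count_set where
  "reg_count_set X A = Sigma (cards_upto A) (\<lambda>c. summand X A (SOME B. B \<in> c))"

end

theory Submission
  imports Defs
begin

definition Surj :: "'a set \<Rightarrow> 'b set \<Rightarrow> ('a \<Rightarrow> 'b) set" where
  "Surj A C = {g \<in> A \<rightarrow>\<^sub>E C. g ` A = C}"

definition Bij :: "'a set \<Rightarrow> 'b set \<Rightarrow> ('a \<Rightarrow> 'b) set" where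
  "Bij A C = {g \<in> A \<rightarrow>\<^sub>E C. bij_betw g A C}"

lemma cod_transport:
  assumes k: "bij_betw k C B"
  shows "bij_betw (\<lambda>\<phi>. restrict (k \<circ> \<phi>) Y) (Y \<rightarrow>\<^sub>E C) (Y \<rightarrow>\<^sub>E B)"
        "bij_betw (\<lambda>\<phi>. restrict (k \<circ> \<phi>) Y) (Surj Y C) (Surj Y B)"
proof -
  let ?k' = "inv_into C k"
  have kk: "\<And>x. x \<in> C \<Longrightarrow> ?k' (k x) = x" using k by (simp add: bij_betw_inv_into_left)
  have kk2: "\<And>y. y \<in> B \<Longrightarrow> k (?k' y) = y" using k by (simp add: bij_betw_inv_into_right)
  have kC: "\<And>x. x \<in> C \<Longrightarrow> k x \<in> B" using k bij_betwE by blast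
  have kB: "\<And>y. y \<in> B \<Longrightarrow> ?k' y \<in> C" using k by (meson bij_betw_apply bij_betw_inv_into)
  show "bij_betw (\<lambda>\<phi>. restrict (k \<circ> \<phi>) Y) (Y \<rightarrow>\<^sub>E C) (Y \<rightarrow>\<^sub>E B)"
  proof (rule bij_betw_byWitness[where f'="\<lambda>\<psi>. restrict (?k' \<circ> \<psi>) Y"])
    show "\<forall>a\<in>Y \<rightarrow>\<^sub>E C. restrict (?k' \<circ> restrict (k \<circ> a) Y) Y = a"
      by (auto simp: fun_eq_iff kk PiE_def extensional_def Pi_def)
    show "\<forall>a\<in>Y \<rightarrow>\<^sub>E B. restrict (k \<circ> restrict (?k' \<circ> a) Y) Y = a"
      by (auto simp: fun_eq_iff kk2 PiE_def extensional_def Pi_def)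
  qed (auto simp: kC kB PiE_iff)
  show "bij_betw (\<lambda>\<phi>. restrict (k \<circ> \<phi>) Y) (Surj Y C) (Surj Y B)"
  proof (rule bij_betw_byWitness[where f'="\<lambda>\<psi>. restrict (?k' \<circ> \<psi>) Y"])
    show "\<forall>a\<in>Surj Y C. restrict (?k' \<circ> restrict (k \<circ> a) Y) Y = a"
      by (auto simp: Surj_def fun_eq_iff kk PiE_def extensional_def Pi_def)
    show "\<forall>a\<in>Surj Y B. restrict (k \<circ> restrict (?k' \<circ> a) Y) Y = a"
      by (auto simp: Surj_def fun_eq_iff kk2 PiE_def extensional_def Pi_def)
    show "(\<lambda>\<phi>. restrict (k \<circ> \<phi>) Y) ` Surj Y C \<subseteq> Surj Y B"
    proof
      fix g assume "g \<in> (\<lambda>\<phi>. restrict (k \<circ> \<phi>) Y) ` Surj Y C"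
      then obtain \<phi> where g: "g = restrict (k \<circ> \<phi>) Y" and p: "\<phi> \<in> Y \<rightarrow>\<^sub>E C" "\<phi> ` Y = C"
        by (auto simp: Surj_def)
      have "g ` Y = k ` (\<phi> ` Y)" by (auto simp: g)
      also have "\<dots> = B" using p k by (simp add: bij_betw_def)
      finally show "g \<in> Surj Y B" using p kC by (auto simp: Surj_def g)
    qed
    show "(\<lambda>\<psi>. restrict (?k' \<circ> \<psi>) Y) ` Surj Y B \<subseteq> Surj Y C"
    proof
      fix g assume "g \<in> (\<lambda>\<psi>. restrict (?k' \<circ> \<psi>) Y) ` Surj Y B"
      then obtain \<phi> where g: "g = restrict (?k' \<circ> \<phi>) Y" and p: "\<phi> \<in> Y \<rightarrow>\<^sub>E B" "\<phi> ` Y = B"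
        by (auto simp: Surj_def)
      have "g ` Y = ?k' ` (\<phi> ` Y)" by (auto simp: g)
      also have "\<dots> = C" using p bij_betw_inv_into[OF k] by (simp add: bij_betw_def)
      finally show "g \<in> Surj Y C" using p kB by (auto simp: Surj_def g)
    qed
  qed
qed

lemma cod_eqpoll:
  assumes "C \<approx> B"
  shows "(Y \<rightarrow>\<^sub>E C) \<approx> (Y \<rightarrow>\<^sub>E B)" "Surj Y C \<approx> Surj Y B"
  using assms cod_transport unfolding eqpoll_def by blast+

lemma dom_transport:
  assumes h: "bij_betw h D' D"
  shows "Bij D B \<approx> Bij D' B"
proof -
  let ?h' = "inv_into D' h"
  have hh: "\<And>x. x \<in> D' \<Longrightarrow> ?h' (h x) = x" using h by (simp add: bij_betw_inv_into_left)
  have hh2: "\<And>y. y \<in> D \<Longrightarrow> h (?h' y) = y" using h by (simp add: bij_betw_inv_into_right)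
  have hD: "\<And>x. x \<in> D' \<Longrightarrow> h x \<in> D" using h bij_betwE by blast
  have hD': "\<And>y. y \<in> D \<Longrightarrow> ?h' y \<in> D'" using h by (meson bij_betw_apply bij_betw_inv_into)
  have h': "bij_betw ?h' D D'" using h by (simp add: bij_betw_inv_into)
  show ?thesis unfolding eqpoll_def
  proof (intro exI bij_betw_byWitness[where f'="\<lambda>\<psi>. restrict (\<psi> \<circ> ?h') D"])
    show "\<forall>a\<in>Bij D B. restrict (restrict (a \<circ> h) D' \<circ> ?h') D = a"
      by (auto simp: Bij_def fun_eq_iff hh2 hD' PiE_def extensional_def Pi_def)
    show "\<forall>a\<in>Bij D' B. restrict (restrict (a \<circ> ?h') D \<circ> h) D' = a"
      by (auto simp: Bij_def fun_eq_iff hh hD PiE_def extensional_def Pi_def)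
    show "(\<lambda>\<phi>. restrict (\<phi> \<circ> h) D') ` Bij D B \<subseteq> Bij D' B"
    proof
      fix g assume "g \<in> (\<lambda>\<phi>. restrict (\<phi> \<circ> h) D') ` Bij D B"
      then obtain \<phi> where g: "g = restrict (\<phi> \<circ> h) D'" and p: "\<phi> \<in> D \<rightarrow>\<^sub>E B" "bij_betw \<phi> D B"
        by (auto simp: Bij_def)
      have "bij_betw (\<phi> \<circ> h) D' B" using h p bij_betw_trans by blast
      then have "bij_betw g D' B" by (rule bij_betw_cong[THEN iffD1, rotated]) (simp add: g)
      then show "g \<in> Bij D' B" using p hD by (auto simp: Bij_def g)
    qed
    show "(\<lambda>\<psi>. restrict (\<psi> \<circ> ?h') D) ` Bij D' B \<subseteq> Bij D B"
    proof
      fix g assume "g \<in> (\<lambda>\<psi>. restrict (\<psi> \<circ> ?h') D) ` Bij D' B"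
      then obtain \<phi> where g: "g = restrict (\<phi> \<circ> ?h') D" and p: "\<phi> \<in> D' \<rightarrow>\<^sub>E B" "bij_betw \<phi> D' B"
        by (auto simp: Bij_def)
      have "bij_betw (\<phi> \<circ> ?h') D B" using h' p bij_betw_trans by blast
      then have "bij_betw g D B" by (rule bij_betw_cong[THEN iffD1, rotated]) (simp add: g)
      then show "g \<in> Bij D B" using p hD' by (auto simp: Bij_def g)
    qed
  qed
qed

lemma Bij_self_perms: "Bij B B \<approx> perms_of B"
  unfolding eqpoll_def
proof (intro exI bij_betw_byWitness[where f'="\<lambda>\<sigma>. restrict \<sigma> B"])
  show "\<forall>a\<in>Bij B B. restrict (\<lambda>x. if x \<in> B then a x else x) B = a"
    by (auto simp: Bij_def fun_eq_iff PiE_def extensional_def)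
  show "\<forall>a\<in>perms_of B. (\<lambda>x. if x \<in> B then restrict a B x else x) = a"
    by (auto simp: perms_of_def fun_eq_iff permutes_not_in)
  show "(\<lambda>a x. if x \<in> B then a x else x) ` Bij B B \<subseteq> perms_of B"
  proof
    fix p assume "p \<in> (\<lambda>a x. if x \<in> B then a x else x) ` Bij B B"
    then obtain a where p: "p = (\<lambda>x. if x \<in> B then a x else x)" and a: "bij_betw a B B"
      by (auto simp: Bij_def)
    have "bij_betw p B B" using a by (rule bij_betw_cong[THEN iffD1, rotated]) (simp add: p)
    then show "p \<in> perms_of B" unfolding perms_of_def by (auto intro!: bij_imp_permutes simp: p)
  qed
  show "(\<lambda>\<sigma>. restrict \<sigma> B) ` perms_of B \<subseteq> Bij B B"
  proof
    fix g assume "g \<in> (\<lambda>\<sigma>. restrict \<sigma> B) ` perms_of B"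
    then obtain \<sigma> where g: "g = restrict \<sigma> B" and s: "\<sigma> permutes B" by (auto simp: perms_of_def)
    have b: "bij_betw \<sigma> B B" using s by (rule permutes_imp_bij)
    then have "bij_betw g B B" by (rule bij_betw_cong[THEN iffD1, rotated]) (simp add: g)
    then show "g \<in> Bij B B" using b by (auto simp: Bij_def g bij_betwE)
  qed
qed

lemma Bij_perms: "D \<approx> B \<Longrightarrow> Bij D B \<approx> perms_of B"
  by (metis Bij_self_perms dom_transport eqpoll_def eqpoll_sym eqpoll_trans)

definition ker :: "'a set \<Rightarrow> ('a \<Rightarrow> 'b) \<Rightarrow> ('a \<times> 'a) set" where
  "ker A g = {(x,y). x \<in> A \<and> y \<in> A \<and> g x = g y}"

lemma ker_equiv: "equiv A (ker A g)"
  by (auto simp: ker_def equiv_def refl_on_def sym_def trans_def)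

lemma ker_class: "x \<in> A \<Longrightarrow> ker A g `` {x} = {y \<in> A. g y = g x}"
  by (auto simp: ker_def)

lemma ker_class_img: "x \<in> A \<Longrightarrow> the_elem (g ` (ker A g `` {x})) = g x"
proof -
  assume x: "x \<in> A"
  have "g ` (ker A g `` {x}) = {g x}" using x by (auto simp: ker_class)
  then show ?thesis by simp
qed

lemma quotient_img: "A // r = (\<lambda>x. r `` {x}) ` A"
  by (auto simp: quotient_def)

lemma Surj_Sigma:
  fixes A B :: "'a set"
  shows "Surj A B \<approx> Sigma (eqrels_with_classes A B) (\<lambda>r. Bij (A // r) B)"
proof -
  define F where "F g = (ker A g, \<lambda>Q\<in>A // ker A g. the_elem (g ` Q))" for g :: "'a \<Rightarrow> 'a"
  define G where "G p = (\<lambda>x\<in>A. snd p (fst p `` {x}))" for p :: "('a \<times> 'a) set \<times> ('a set \<Rightarrow> 'a)"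
  have F_bij: "bij_betw (snd (F g)) (A // ker A g) B" if g: "g \<in> Surj A B" for g
  proof -
    have inj: "inj_on (snd (F g)) (A // ker A g)"
    proof (rule inj_onI)
      fix Q1 Q2 assume Q1: "Q1 \<in> A // ker A g" and Q2: "Q2 \<in> A // ker A g"
        and eq: "snd (F g) Q1 = snd (F g) Q2"
      obtain x where x: "x \<in> A" "Q1 = ker A g `` {x}" using Q1 by (auto elim: quotientE)
      obtain y where y: "y \<in> A" "Q2 = ker A g `` {y}" using Q2 by (auto elim: quotientE)
      have "g x = g y" using eq Q1 Q2 x y by (simp add: F_def ker_class_img)
      then show "Q1 = Q2" using x y by (simp add: ker_class)
    qed
    have "snd (F g) ` (A // ker A g) = (\<lambda>x. the_elem (g ` (ker A g``{x}))) ` A"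
      unfolding quotient_img image_image by (rule image_cong) (auto simp: F_def quotient_img)
    also have "\<dots> = g ` A" by (rule image_cong) (simp_all add: ker_class_img)
    also have "\<dots> = B" using g by (simp add: Surj_def)
    finally show ?thesis using inj by (simp add: bij_betw_def)
  qed
  have G_props: "G (r, \<phi>) \<in> Surj A B \<and> ker A (G (r, \<phi>)) = r"
    if r: "r \<in> eqrels_with_classes A B" and ph: "\<phi> \<in> Bij (A // r) B" for r \<phi>
  proof -
    have eq: "equiv A r" using r by (simp add: eqrels_with_classes_def)
    have b: "bij_betw \<phi> (A // r) B" using ph by (simp add: Bij_def)
    have "G (r, \<phi>) ` A = \<phi> ` (A // r)" by (auto simp: G_def quotient_img)
    also have "\<dots> = B" using b by (simp add: bij_betw_def)
    finally have img: "G (r, \<phi>) ` A = B" .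
    have "G (r, \<phi>) \<in> A \<rightarrow>\<^sub>E B" using img by (auto simp: G_def)
    moreover have "ker A (G (r, \<phi>)) = r"
    proof (rule set_eqI, clarify)
      fix x y
      show "(x, y) \<in> ker A (G (r, \<phi>)) \<longleftrightarrow> (x, y) \<in> r"
      proof (cases "x \<in> A \<and> y \<in> A")
        case True
        then have "(x, y) \<in> ker A (G (r, \<phi>)) \<longleftrightarrow> \<phi> (r``{x}) = \<phi> (r``{y})"
          by (simp add: ker_def G_def)
        also have "\<dots> \<longleftrightarrow> r``{x} = r``{y}"
          using inj_on_eq_iff[OF bij_betw_imp_inj_on[OF b] quotientI quotientI] True by auto
        also have "\<dots> \<longleftrightarrow> (x, y) \<in> r" using eq True by (simp add: eq_equiv_class_iff)
        finally show ?thesis .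
      next
        case False
        then show ?thesis using eq by (auto simp: ker_def equiv_def refl_on_def)
      qed
    qed
    ultimately show ?thesis using img by (simp add: Surj_def)
  qed
  show ?thesis unfolding eqpoll_def
  proof (intro exI bij_betw_byWitness[where f'=G])
    show "\<forall>g\<in>Surj A B. G (F g) = g"
    proof
      fix g assume g: "g \<in> Surj A B"
      show "G (F g) = g"
        using g by (auto simp: G_def F_def fun_eq_iff quotientI ker_class_img Surj_def PiE_def extensional_def)
    qed
    show "\<forall>p\<in>Sigma (eqrels_with_classes A B) (\<lambda>r. Bij (A // r) B). F (G p) = p"
    proof
      fix p assume "p \<in> Sigma (eqrels_with_classes A B) (\<lambda>r. Bij (A // r) B)"
      then obtain r \<phi> where p: "p = (r, \<phi>)" and r: "r \<in> eqrels_with_classes A B"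
        and ph: "\<phi> \<in> Bij (A // r) B" by auto
      have eq: "equiv A r" using r by (simp add: eqrels_with_classes_def)
      have k: "ker A (G p) = r" using G_props[OF r ph] p by simp
      have "(\<lambda>Q\<in>A // r. the_elem (G p ` Q)) = \<phi>"
      proof
        fix Q show "(\<lambda>Q\<in>A // r. the_elem (G p ` Q)) Q = \<phi> Q"
        proof (cases "Q \<in> A // r")
          case True
          then obtain x where x: "x \<in> A" "Q = r `` {x}" by (auto elim: quotientE)
          have "G p ` Q = {\<phi> Q}"
          proof
            show "G p ` Q \<subseteq> {\<phi> Q}"
            proof
              fix z assume "z \<in> G p ` Q"
              then obtain y where y: "y \<in> Q" "z = G p y" by auto
              have yA: "y \<in> A" using in_quotient_imp_subset[OF eq True] y(1) by blast
              have "r `` {y} = r `` {x}" using y x eq yA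
                by (metis Image_singleton_iff eq_equiv_class_iff equiv_class_eq_iff)
              then show "z \<in> {\<phi> Q}" using y x yA by (simp add: G_def p)
            qed
            have "x \<in> Q" using x eq by (auto simp: equiv_def refl_on_def)
            then show "{\<phi> Q} \<subseteq> G p ` Q" using x by (auto simp: G_def p intro!: image_eqI[of _ _ x])
          qed
          then show ?thesis using True by simp
        next
          case False
          then show ?thesis using ph by (auto simp: Bij_def PiE_def extensional_def)
        qed
      qed
      then show "F (G p) = p" using k p by (simp add: F_def)
    qed
    show "F ` Surj A B \<subseteq> Sigma (eqrels_with_classes A B) (\<lambda>r. Bij (A // r) B)"
    proof
      fix q assume "q \<in> F ` Surj A B"
      then obtain g where q: "q = F g" and g: "g \<in> Surj A B" by auto
      have b: "bij_betw (snd (F g)) (A // ker A g) B" by (rule F_bij[OF g])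
      have "ker A g \<in> eqrels_with_classes A B"
        using b ker_equiv by (auto simp: eqrels_with_classes_def eqpoll_def)
      moreover have "snd (F g) \<in> Bij (A // ker A g) B"
        using b bij_betwE[OF b] by (auto simp: Bij_def F_def)
      ultimately show "q \<in> Sigma (eqrels_with_classes A B) (\<lambda>r. Bij (A // r) B)"
        by (simp add: q F_def)
    qed
    show "G ` Sigma (eqrels_with_classes A B) (\<lambda>r. Bij (A // r) B) \<subseteq> Surj A B"
      using G_props by auto
  qed
qed


lemma Surj_perm:
  fixes A B C :: "'a set"
  assumes "C \<approx> B"
  shows "Surj A C \<approx> perms_of B \<times> eqrels_with_classes A B"
proof -
  have "Surj A C \<approx> Surj A B" using assms by (rule cod_eqpoll)
  also have "\<dots> \<approx> Sigma (eqrels_with_classes A B) (\<lambda>r. Bij (A // r) B)" by (rule Surj_Sigma)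
  also have "\<dots> \<approx> Sigma (eqrels_with_classes A B) (\<lambda>_. perms_of B)"
    by (rule Sigma_eqpoll_cong[where h=id]) (auto simp: eqrels_with_classes_def intro: Bij_perms)
  also have "\<dots> \<approx> perms_of B \<times> eqrels_with_classes A B" by (rule times_commute_eqpoll)
  finally show ?thesis .
qed

lemma fiber:
  fixes X A B :: "'a set"
  shows "Sigma (subsets_of_size A B) (\<lambda>C. Surj A C \<times> ((X - A) \<rightarrow>\<^sub>E C)) \<approx> summand X A B"
proof -
  have "Sigma (subsets_of_size A B) (\<lambda>C. Surj A C \<times> ((X - A) \<rightarrow>\<^sub>E C))
     \<approx> Sigma (subsets_of_size A B) (\<lambda>_. (perms_of B \<times> eqrels_with_classes A B) \<times> ((X - A) \<rightarrow>\<^sub>E B))"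
  proof (rule Sigma_eqpoll_cong[where h=id])
    show "bij_betw id (subsets_of_size A B) (subsets_of_size A B)" by simp
    fix C assume "C \<in> subsets_of_size A B"
    then have CB: "C \<approx> B" by (simp add: subsets_of_size_def)
    show "Surj A C \<times> ((X - A) \<rightarrow>\<^sub>E C) \<approx> (perms_of B \<times> eqrels_with_classes A B) \<times> ((X - A) \<rightarrow>\<^sub>E B)"
      by (rule times_eqpoll_cong[OF Surj_perm[OF CB] cod_eqpoll(1)[OF CB]])
  qed
  also have "\<dots> \<approx> summand X A B" unfolding summand_def eqpoll_def
    by (rule exI[where x="\<lambda>(s,((p,e),q)). (p,q,e,s)"], rule bij_betw_byWitness[where f'="\<lambda>(p,q,e,s). (s,((p,e),q))"]) auto
  finally show ?thesis .
qed


lemma Reg_char: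
  assumes AX: "A \<subseteq> X" and Ane: "A \<noteq> {}"
  shows "Reg (TXA X A) (Tcomp X) = {f \<in> X \<rightarrow>\<^sub>E A. f ` X = f ` A}"
proof -
  have key: "(\<exists>x\<in>X \<rightarrow>\<^sub>E A. compose X (compose X a x) a = a) \<longleftrightarrow> a ` X = a ` A"
    if a: "a \<in> X \<rightarrow>\<^sub>E A" for a
  proof -
    have aA: "\<And>y. y \<in> X \<Longrightarrow> a y \<in> A" using a by auto
    have cm: "compose X (compose X a x) a = a \<longleftrightarrow> (\<forall>y\<in>X. a (x (a y)) = a y)" for x
    proof
      assume eq: "compose X (compose X a x) a = a"
      show "\<forall>y\<in>X. a (x (a y)) = a y"
      proof
        fix y assume y: "y \<in> X"
        have ay: "a y \<in> X" using aA[OF y] AX by blast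
        have "a (x (a y)) = compose X a x (a y)" using ay by (simp add: compose_eq)
        also have "\<dots> = compose X (compose X a x) a y" using y by (simp add: compose_eq)
        also have "\<dots> = a y" using eq by simp
        finally show "a (x (a y)) = a y" .
      qed
    next
      assume h: "\<forall>y\<in>X. a (x (a y)) = a y"
      show "compose X (compose X a x) a = a"
      proof
        fix y show "compose X (compose X a x) a y = a y"
        proof (cases "y \<in> X")
          case True
          have ay: "a y \<in> X" using aA[OF True] AX by blast
          have "compose X (compose X a x) a y = compose X a x (a y)" using True by (simp add: compose_eq)
          also have "\<dots> = a (x (a y))" using ay by (simp add: compose_eq)
          also have "\<dots> = a y" using h True by blast
          finally show ?thesis .
        next
          case False
          have "a y = undefined" using a False by (simp add: PiE_def extensional_def)
          moreover have "compose X (compose X a x) a y = undefined" using False by (simp add: compose_def)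
          ultimately show ?thesis by simp
        qed
      qed
    qed
    show ?thesis
    proof
      assume "\<exists>x\<in>X \<rightarrow>\<^sub>E A. compose X (compose X a x) a = a"
      then obtain x where x: "x \<in> X \<rightarrow>\<^sub>E A" "\<forall>y\<in>X. a (x (a y)) = a y" using cm by blast
      have "a ` X \<subseteq> a ` A"
      proof
        fix z assume "z \<in> a ` X"
        then obtain y where y: "y \<in> X" "z = a y" by auto
        have "a y \<in> X" using aA[OF y(1)] AX by auto
        then have "x (a y) \<in> A" by (rule PiE_mem[OF x(1)])
        then show "z \<in> a ` A" using x(2) y by (metis image_eqI)
      qed
      then show "a ` X = a ` A" using AX by auto
    next
      assume im: "a ` X = a ` A"
      define x where "x = (\<lambda>z\<in>X. SOME w. w \<in> A \<and> (z \<in> a ` A \<longrightarrow> a w = z))"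
      have ex: "\<exists>w. w \<in> A \<and> (z \<in> a ` A \<longrightarrow> a w = z)" for z using Ane by auto
      have xs: "x z \<in> A \<and> (z \<in> a ` A \<longrightarrow> a (x z) = z)" if "z \<in> X" for z
        using someI_ex[OF ex[of z]] that by (simp add: x_def)
      have "x \<in> X \<rightarrow>\<^sub>E A" using xs by (auto simp: x_def)
      moreover have "\<forall>y\<in>X. a (x (a y)) = a y"
      proof
        fix y assume y: "y \<in> X"
        have ay: "a y \<in> X" using aA[OF y] AX by blast
        have "a y \<in> a ` A" using im y by blast
        then show "a (x (a y)) = a y" using xs[OF ay] by blast
      qed
      ultimately show "\<exists>x\<in>X \<rightarrow>\<^sub>E A. compose X (compose X a x) a = a" using cm by blast
    qed
  qed
  show ?thesis unfolding Reg_def TXA_def Tcomp_def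
  proof (rule Collect_cong)
    fix a
    show "(a \<in> X \<rightarrow>\<^sub>E A \<and> (\<exists>x\<in>X \<rightarrow>\<^sub>E A. compose X (compose X a x) a = a)) =
          (a \<in> X \<rightarrow>\<^sub>E A \<and> a ` X = a ` A)"
      using key[of a] by blast
  qed
qed

lemma Reg_S1:
  assumes AX: "A \<subseteq> X" and Ane: "A \<noteq> {}"
  shows "{f \<in> X \<rightarrow>\<^sub>E A. f ` X = f ` A} \<approx>
         Sigma {C. C \<subseteq> A \<and> C \<noteq> {}} (\<lambda>C. Surj A C \<times> ((X - A) \<rightarrow>\<^sub>E C))"
  unfolding eqpoll_def
proof (intro exI bij_betw_byWitness[where f'="\<lambda>(C,(g,h)). \<lambda>x\<in>X. if x \<in> A then g x else h x"])
  let ?F = "\<lambda>f. (f ` A, (restrict f A, restrict f (X - A)))"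
  let ?G = "\<lambda>(C,(g,h)). \<lambda>x\<in>X. if x \<in> A then g x else h x"
  show "\<forall>f\<in>{f \<in> X \<rightarrow>\<^sub>E A. f ` X = f ` A}. ?G (?F f) = f"
    by (auto simp: fun_eq_iff PiE_def extensional_def)
  show "\<forall>p\<in>Sigma {C. C \<subseteq> A \<and> C \<noteq> {}} (\<lambda>C. Surj A C \<times> ((X - A) \<rightarrow>\<^sub>E C)). ?F (?G p) = p"
  proof
    fix p assume "p \<in> Sigma {C. C \<subseteq> A \<and> C \<noteq> {}} (\<lambda>C. Surj A C \<times> ((X - A) \<rightarrow>\<^sub>E C))"
    then obtain C g h where p: "p = (C,(g,h))" and g: "g \<in> A \<rightarrow>\<^sub>E C" "g ` A = C"
      and h: "h \<in> (X - A) \<rightarrow>\<^sub>E C" by (auto simp: Surj_def)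
    have "?G p ` A = g ` A" using AX by (auto simp: p)
    moreover have "restrict (?G p) A = g" using AX g(1)
      by (auto simp: p fun_eq_iff PiE_def extensional_def)
    moreover have "restrict (?G p) (X - A) = h" using h
      by (auto simp: p fun_eq_iff PiE_def extensional_def)
    ultimately show "?F (?G p) = p" using g p by simp
  qed
  show "?F ` {f \<in> X \<rightarrow>\<^sub>E A. f ` X = f ` A} \<subseteq> Sigma {C. C \<subseteq> A \<and> C \<noteq> {}} (\<lambda>C. Surj A C \<times> ((X - A) \<rightarrow>\<^sub>E C))"
  proof
    fix q assume "q \<in> ?F ` {f \<in> X \<rightarrow>\<^sub>E A. f ` X = f ` A}"
    then obtain f where q: "q = ?F f" and f: "f \<in> X \<rightarrow>\<^sub>E A" "f ` X = f ` A" by auto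
    have "f ` A \<subseteq> A" using f AX by auto
    moreover have "f ` A \<noteq> {}" using Ane by auto
    moreover have "restrict f A \<in> Surj A (f ` A)" by (auto simp: Surj_def)
    moreover have "restrict f (X - A) \<in> (X - A) \<rightarrow>\<^sub>E f ` A" using f(2) by auto
    ultimately show "q \<in> Sigma {C. C \<subseteq> A \<and> C \<noteq> {}} (\<lambda>C. Surj A C \<times> ((X - A) \<rightarrow>\<^sub>E C))"
      by (simp add: q)
  qed
  show "?G ` Sigma {C. C \<subseteq> A \<and> C \<noteq> {}} (\<lambda>C. Surj A C \<times> ((X - A) \<rightarrow>\<^sub>E C)) \<subseteq> {f \<in> X \<rightarrow>\<^sub>E A. f ` X = f ` A}"
  proof
    fix f assume "f \<in> ?G ` Sigma {C. C \<subseteq> A \<and> C \<noteq> {}} (\<lambda>C. Surj A C \<times> ((X - A) \<rightarrow>\<^sub>E C))"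
    then obtain C g h where f: "f = ?G (C,(g,h))" and C: "C \<subseteq> A" and g: "g \<in> A \<rightarrow>\<^sub>E C" "g ` A = C"
      and h: "h \<in> (X - A) \<rightarrow>\<^sub>E C" by (auto simp: Surj_def)
    have fA: "f ` A = C" using AX g by (auto simp: f)
    have "f ` X \<subseteq> C" using g h by (auto simp: f)
    then have "f ` X = f ` A" using fA AX by auto
    moreover have "f \<in> X \<rightarrow>\<^sub>E A"
    proof -
      have "\<forall>i\<in>X. f i \<in> A" using \<open>f ` X \<subseteq> C\<close> C by blast
      moreover have "f \<in> extensional X" by (simp add: f)
      ultimately show ?thesis by (simp add: PiE_iff)
    qed
    ultimately show "f \<in> {f \<in> X \<rightarrow>\<^sub>E A. f ` X = f ` A}" by simp
  qed
qed


lemma cards_upto_mem: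
  "c \<in> cards_upto A \<longleftrightarrow> (\<exists>C0. C0 \<subseteq> A \<and> C0 \<noteq> {} \<and> c = {D. C0 \<approx> D})"
proof -
  have im: "{(B, C). B \<approx> C} `` {C0} = {D. C0 \<approx> D}" for C0 :: "'a set" by (rule set_eqI) simp
  show ?thesis unfolding cards_upto_def quotient_def im by blast
qed

lemma S1_S2:
  fixes A :: "'a set" and F :: "'a set \<Rightarrow> 'b set"
  shows "Sigma {C. C \<subseteq> A \<and> C \<noteq> {}} F \<approx>
         Sigma (cards_upto A) (\<lambda>c. Sigma (subsets_of_size A (SOME B. B \<in> c)) F)"
  unfolding eqpoll_def
proof (rule exI[where x="\<lambda>(C, p). ({D::'a set. C \<approx> D}, (C, p))"], rule bij_betw_byWitness[where f'="\<lambda>(c,p). p"])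
  let ?T = "Sigma (cards_upto A) (\<lambda>c. Sigma (subsets_of_size A (SOME B. B \<in> c)) F)"
  let ?\<Phi> = "\<lambda>(C, p). ({D::'a set. C \<approx> D}, (C, p))"
  have rep: "C0 \<approx> (SOME B. B \<in> {D::'a set. C0 \<approx> D})" for C0 :: "'a set"
  proof -
    have "C0 \<in> {D::'a set. C0 \<approx> D}" by simp
    then have "(SOME B. B \<in> {D::'a set. C0 \<approx> D}) \<in> {D. C0 \<approx> D}" by (rule someI)
    then show ?thesis by blast
  qed
  show "\<forall>a\<in>Sigma {C. C \<subseteq> A \<and> C \<noteq> {}} F. (\<lambda>(c, p). p) (?\<Phi> a) = a" by auto
  show "\<forall>a\<in>?T. ?\<Phi> ((\<lambda>(c, p). p) a) = a"
  proof
    fix q assume "q \<in> ?T"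
    then obtain c C p where q: "q = (c, (C, p))" and c: "c \<in> cards_upto A"
      and C: "C \<in> subsets_of_size A (SOME B. B \<in> c)" by auto
    obtain C0 where c0: "C0 \<subseteq> A" "C0 \<noteq> {}" "c = {D::'a set. C0 \<approx> D}"
      using cards_upto_mem[THEN iffD1, OF c] by (elim exE conjE) (rule that)
    have CC0: "C \<approx> C0"
    proof -
      have "C \<approx> (SOME B. B \<in> c)" using C by (simp add: subsets_of_size_def)
      moreover have "C0 \<approx> (SOME B. B \<in> c)" using rep[of C0] c0(3) by simp
      ultimately show ?thesis by (rule eqpoll_trans[OF _ eqpoll_sym])
    qed
    have "{D::'a set. C \<approx> D} = c"
    proof (rule set_eqI)
      fix D :: "'a set"
      have "C \<approx> D \<longleftrightarrow> C0 \<approx> D"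
        using eqpoll_trans[OF CC0, of D] eqpoll_trans[OF eqpoll_sym[OF CC0], of D] by blast
      then show "D \<in> {D::'a set. C \<approx> D} \<longleftrightarrow> D \<in> c" using c0(3) by simp
    qed
    then show "?\<Phi> ((\<lambda>(c, p). p) q) = q" by (simp add: q)
  qed
  show "?\<Phi> ` Sigma {C. C \<subseteq> A \<and> C \<noteq> {}} F \<subseteq> ?T"
  proof
    fix q assume "q \<in> ?\<Phi> ` Sigma {C. C \<subseteq> A \<and> C \<noteq> {}} F"
    then obtain C p where q: "q = ({D::'a set. C \<approx> D}, (C, p))" and C: "C \<subseteq> A" "C \<noteq> {}" and p: "p \<in> F C"
      by auto
    have "{D::'a set. C \<approx> D} \<in> cards_upto A"
      by (rule cards_upto_mem[THEN iffD2]) (rule exI[of _ C], simp add: C)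
    moreover have "C \<in> subsets_of_size A (SOME B. B \<in> {D::'a set. C \<approx> D})"
      using C rep[of C] by (simp add: subsets_of_size_def)
    ultimately show "q \<in> ?T" using p q by simp
  qed
  show "(\<lambda>(c, p). p) ` ?T \<subseteq> Sigma {C. C \<subseteq> A \<and> C \<noteq> {}} F"
  proof
    fix q assume "q \<in> (\<lambda>(c, p). p) ` ?T"
    then obtain c C p where q: "q = (C, p)" and c: "c \<in> cards_upto A"
      and C: "C \<in> subsets_of_size A (SOME B. B \<in> c)" and p: "p \<in> F C" by auto
    obtain C0 where c0: "C0 \<subseteq> A" "C0 \<noteq> {}" "c = {D::'a set. C0 \<approx> D}"
      using cards_upto_mem[THEN iffD1, OF c] by (elim exE conjE) (rule that)
    have CC0: "C \<approx> C0"
    proof -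
      have "C \<approx> (SOME B. B \<in> c)" using C by (simp add: subsets_of_size_def)
      moreover have "C0 \<approx> (SOME B. B \<in> c)" using rep[of C0] c0(3) by simp
      ultimately show ?thesis by (rule eqpoll_trans[OF _ eqpoll_sym])
    qed
    then have "C \<noteq> {}" using c0(2) eqpoll_sym[OF CC0] by auto
    then show "q \<in> Sigma {C. C \<subseteq> A \<and> C \<noteq> {}} F" using C p q by (auto simp: subsets_of_size_def)
  qed
qed

theorem proposition5p15:
  fixes X A :: "'a set"
  assumes "X \<noteq> {}" and "A \<noteq> {}" and "A \<subseteq> X"
  shows "Reg (TXA X A) (Tcomp X) \<approx> reg_count_set X A"
proof -
  have "Reg (TXA X A) (Tcomp X) = {f \<in> X \<rightarrow>\<^sub>E A. f ` X = f ` A}"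
    using assms by (simp add: Reg_char)
  also have "\<dots> \<approx> Sigma {C. C \<subseteq> A \<and> C \<noteq> {}} (\<lambda>C. Surj A C \<times> ((X - A) \<rightarrow>\<^sub>E C))"
    using assms by (simp add: Reg_S1)
  also have "\<dots> \<approx> Sigma (cards_upto A) (\<lambda>c. Sigma (subsets_of_size A (SOME B. B \<in> c))
                       (\<lambda>C. Surj A C \<times> ((X - A) \<rightarrow>\<^sub>E C)))"
    by (rule S1_S2)
  also have "\<dots> \<approx> reg_count_set X A"
    unfolding reg_count_set_def
    by (rule Sigma_eqpoll_cong[where h=id]) (simp_all add: fiber)
  finally show ?thesis .
qed

end
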